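(* Let $n>1$. Let $\alpha_1,\dots,\alpha_n\ge0$ with $\alpha_p,\alpha_q\neq0$ for some $p\neq q$ and $\sum_{i=1}^n\alpha_i^2=1$. Let $z_0\in\mathbb{T}^n$ and, for each $i$, let $\varphi_i\in H^\infty(\mathbb{D}^n)$ be an inner function independent of the variable $z_i$ whose value $\varphi_i(z_0)=\lim_{r\to1^-}\varphi_i(rz_0)$ is well defined with $|\varphi_i(z_0)|=1$. Put $\zeta_i=\prod_{j\neq i}z_j$, $\beta_i=(\zeta_i\varphi_i)(z_0)$, and \[ \varphi=\sum_{i=1}^n\alpha_i\bar\beta_i\zeta_i\varphi_i\in H^\infty(\mathbb{D}^n). \] Let $\mathcal{Q}=\ker\big(\prod_{i=1}^nT_{z_i}^*\big)\subseteq H^2(\mathbb{T}^n)$. Then $S_\varphi=P_{\mathcal{Q}}T_\varphi|_{\mathcal{Q}}$ does not admit any lift, i.e. there is no $\phi\in\mathcal{S}(\mathbb{D}^n)$ with $S_\varphi=P_{\mathcal{Q}}T_\phi|_{\mathcal{Q}}$.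
   Context: $H^2(\mathbb{T}^n)$ is the Hardy space of $\mathbb{D}^n$; $T_\varphi f=\varphi f$; $P_{\mathcal{Q}}$ is the orthogonal projection onto $\mathcal{Q}$ (a quotient module, i.e. invariant under all $T_{z_i}^*$). An inner function is $\varphi\in H^\infty(\mathbb{D}^n)$ with radial boundary values of modulus $1$ a.e. on $\mathbb{T}^n$. $\mathcal{S}(\mathbb{D}^n)$ is the closed unit ball of $H^\infty(\mathbb{D}^n)$. *)

theory Defs
  imports "HOL-Analysis.Analysis"
begin

text \<open>Functions on the polydisc are represented by their Taylor coefficient families
  c :: ('n \<Rightarrow> nat) \<Rightarrow> complex (multi-index to coefficient); the index type 'n
  is a finite type with CARD('n) = n.  H^2(T^n) is identified (isometrically) with
  square-summable coefficient families.\<close>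

definition polydisc :: "(complex ^ 'n) set" where
  "polydisc = {z. \<forall>i. cmod (z $ i) < 1}"

definition monom :: "complex ^ 'n \<Rightarrow> ('n::finite \<Rightarrow> nat) \<Rightarrow> complex" where
  "monom z a = (\<Prod>i\<in>UNIV. (z $ i) ^ (a i))"

definition fn :: "(('n::finite \<Rightarrow> nat) \<Rightarrow> complex) \<Rightarrow> complex ^ 'n \<Rightarrow> complex" where
  "fn c z = (\<Sum>\<^sub>\<infinity>a. c a * monom z a)"

definition Hinf :: "(('n::finite \<Rightarrow> nat) \<Rightarrow> complex) set" where
  "Hinf = {c. (\<forall>z\<in>polydisc. (\<lambda>a. c a * monom z a) summable_on UNIV) \<and>
              (\<exists>M. \<forall>z\<in>polydisc. cmod (fn c z) \<le> M)}"

definition Schur :: "(('n::finite \<Rightarrow> nat) \<Rightarrow> complex) set" where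
  "Schur = {c. c \<in> Hinf \<and> (\<forall>z\<in>polydisc. cmod (fn c z) \<le> 1)}"

definition torus_pt :: "real ^ 'n \<Rightarrow> complex ^ 'n" where
  "torus_pt \<theta> = (\<chi> i. cis (\<theta> $ i))"

text \<open>Inner function: radial boundary values of modulus 1 a.e. on T^n
  (T^n parametrised by angles; periodicity makes a.e. on R^n equivalent).\<close>
definition inner_fun :: "(('n::finite \<Rightarrow> nat) \<Rightarrow> complex) \<Rightarrow> bool" where
  "inner_fun c \<longleftrightarrow> c \<in> Hinf \<and>
     (AE \<theta> in lborel. \<exists>L. ((\<lambda>r. fn c (r *\<^sub>R torus_pt \<theta>)) \<longlongrightarrow> L) (at_left 1) \<and> cmod L = 1)"

definition H2 :: "(('n::finite \<Rightarrow> nat) \<Rightarrow> complex) set" where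
  "H2 = {f. (\<lambda>a. (cmod (f a))\<^sup>2) summable_on UNIV}"

definition conv :: "(('n::finite \<Rightarrow> nat) \<Rightarrow> complex) \<Rightarrow> (('n \<Rightarrow> nat) \<Rightarrow> complex) \<Rightarrow> ('n \<Rightarrow> nat) \<Rightarrow> complex" where
  "conv c f a = (\<Sum>b\<in>{b. b \<le> a}. c b * f (\<lambda>i. a i - b i))"

definition Toep :: "(('n::finite \<Rightarrow> nat) \<Rightarrow> complex) \<Rightarrow> (('n \<Rightarrow> nat) \<Rightarrow> complex) \<Rightarrow> ('n \<Rightarrow> nat) \<Rightarrow> complex" where
  "Toep c f = conv c f"

definition mono_coeff :: "('n \<Rightarrow> nat) \<Rightarrow> ('n \<Rightarrow> nat) \<Rightarrow> complex" where
  "mono_coeff g = (\<lambda>a. if a = g then 1 else 0)"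

text \<open>Adjoint of T_{z_i} on coefficients (backward shift in variable i), and the
  product of all T_{z_i}^* (they commute): shifts every index by one.\<close>
definition Tz_adj :: "'n \<Rightarrow> (('n \<Rightarrow> nat) \<Rightarrow> complex) \<Rightarrow> ('n \<Rightarrow> nat) \<Rightarrow> complex" where
  "Tz_adj i f = (\<lambda>a. f (a(i := a i + 1)))"

definition Tz_adj_prod :: "(('n \<Rightarrow> nat) \<Rightarrow> complex) \<Rightarrow> ('n \<Rightarrow> nat) \<Rightarrow> complex" where
  "Tz_adj_prod f = (\<lambda>a. f (\<lambda>i. a i + 1))"

definition Qmod :: "(('n::finite \<Rightarrow> nat) \<Rightarrow> complex) set" where
  "Qmod = {f \<in> H2. Tz_adj_prod f = (\<lambda>_. 0)}"

text \<open>Orthogonal projection onto Q (in the orthonormal monomial basis, Q is the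
  closed span of the monomials z^a with some a_i = 0).\<close>
definition projQ :: "(('n \<Rightarrow> nat) \<Rightarrow> complex) \<Rightarrow> ('n \<Rightarrow> nat) \<Rightarrow> complex" where
  "projQ f = (\<lambda>a. if (\<forall>i. 1 \<le> a i) then 0 else f a)"

definition has_lift :: "(('n::finite \<Rightarrow> nat) \<Rightarrow> complex) \<Rightarrow> bool" where
  "has_lift c \<longleftrightarrow> (\<exists>d\<in>Schur. \<forall>f\<in>Qmod. projQ (Toep d f) = projQ (Toep c f))"

end

theory Submission
  imports Defs
begin


lemma integral_lborel_vec_prod:
  fixes f :: "'n::finite \<Rightarrow> real \<Rightarrow> complex"
  assumes int: "\<And>i. integrable lborel (f i)"
  shows "(\<integral>x. (\<Prod>i\<in>UNIV. f i (x $ i)) \<partial>(lborel::(real^'n) measure)) = (\<Prod>i\<in>UNIV. integral\<^sup>L lborel (f i))"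
proof -
  interpret product_sigma_finite "\<lambda>_::(real^'n). lborel::real measure"
    by standard
  define ix :: "real^'n \<Rightarrow> 'n" where "ix b = (SOME i. b = axis i 1)" for b
  have ix: "ix (axis i 1) = i" for i
    unfolding ix_def by (rule someI2[of _ i]) (auto simp: axis_eq_axis)
  have bas: "(Basis :: (real^'n) set) = (\<lambda>i. axis i 1) ` UNIV"
    by (auto simp: Basis_vec_def)
  have injax: "inj (\<lambda>i::'n. axis i (1::real))"
    by (auto simp: inj_def axis_eq_axis)
  have comp: "(\<Sum>b\<in>Basis. y b *\<^sub>R b) $ i = y (axis i 1)" for y :: "real^'n \<Rightarrow> real" and i
  proof -
    have "(\<Sum>b\<in>Basis. y b *\<^sub>R b) $ i = (\<Sum>b\<in>Basis. y b * (b $ i))"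
      by (simp add: sum_component)
    also have "\<dots> = (\<Sum>j\<in>UNIV. y (axis j 1) * (axis j 1 $ i))"
      unfolding bas by (subst sum.reindex[OF injax]) simp
    also have "\<dots> = (\<Sum>j\<in>UNIV. if j = i then y (axis i 1) else 0)"
      by (rule sum.cong) (auto simp: axis_def)
    also have "\<dots> = y (axis i 1)" by simp
    finally show ?thesis .
  qed
  have meas: "(\<lambda>x. \<Prod>i\<in>UNIV. f i (x $ i)) \<in> borel_measurable (borel :: (real^'n) measure)"
    using int by measurable
  have "(\<integral>x. (\<Prod>i\<in>UNIV. f i (x $ i)) \<partial>(lborel::(real^'n) measure))
       = (\<integral>y. (\<Prod>i\<in>UNIV. f i ((\<Sum>b\<in>Basis. y b *\<^sub>R b) $ i)) \<partial>(\<Pi>\<^sub>M b\<in>Basis. lborel))"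
    by (subst lborel_eq, subst integral_distr) (use meas in auto)
  also have "\<dots> = (\<integral>y. (\<Prod>b\<in>Basis. f (ix b) (y b)) \<partial>(\<Pi>\<^sub>M b\<in>Basis. lborel))"
    unfolding comp by (simp add: bas prod.reindex[OF injax] ix)
  also have "\<dots> = (\<Prod>b\<in>Basis. integral\<^sup>L lborel (f (ix b)))"
    by (rule product_integral_prod) (auto intro: int)
  also have "\<dots> = (\<Prod>i\<in>UNIV. integral\<^sup>L lborel (f i))"
    by (simp add: bas prod.reindex[OF injax] ix)
  finally show ?thesis .
qed




lemma cis_int_integral:
  fixes k :: int
  shows "(\<integral>t. indicator {0..2*pi} t *\<^sub>R cis (of_int k * t) \<partial>lborel) = (if k = 0 then complex_of_real (2*pi) else 0)"
proof -
  have si: "set_integrable lborel {0..2*pi} (\<lambda>t. cis (of_int k * t))"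
    by (intro borel_integrable_atLeastAtMost') (intro continuous_intros)
  have eq: "(\<integral>t. indicator {0..2*pi} t *\<^sub>R cis (of_int k * t) \<partial>lborel) = integral {0..2*pi} (\<lambda>t. cis (of_int k * t))"
    using set_borel_integral_eq_integral(2)[OF si] by (simp add: set_lebesgue_integral_def)
  show ?thesis
  proof (cases "k = 0")
    case True
    then show ?thesis using eq by (simp add: scaleR_conv_of_real)
  next
    case False
    define F where "F t = cis (of_int k * t) / (\<i> * of_int k)" for t
    have der: "(F has_vector_derivative cis (of_int k * t)) (at t within {0..2*pi})" for t
    proof -
      have "((\<lambda>t. cis (of_int k * t)) has_derivative (\<lambda>h. (of_int k * h) *\<^sub>R (\<i> * cis (of_int k * t)))) (at t within {0..2*pi})"
        by (auto intro!: derivative_eq_intros)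
      then have "((\<lambda>t. cis (of_int k * t)) has_vector_derivative (of_int k * (\<i> * cis (of_int k * t)))) (at t within {0..2*pi})"
        by (simp add: has_vector_derivative_def scaleR_conv_of_real mult.assoc mult.left_commute)
      then have "((\<lambda>t. cis (of_int k * t) / (\<i> * of_int k)) has_vector_derivative (of_int k * (\<i> * cis (of_int k * t))) / (\<i> * of_int k)) (at t within {0..2*pi})"
        by (rule has_vector_derivative_divide)
      then show ?thesis using False unfolding F_def by (simp add: field_simps)
    qed
    have "((\<lambda>t. cis (of_int k * t)) has_integral (F (2*pi) - F 0)) {0..2*pi}"
      by (rule fundamental_theorem_of_calculus) (use der in auto)
    moreover have "F (2*pi) = F 0"
    proof -
      have "cis (of_int k * (2*pi)) = 1"
        using cis_multiple_2pi[of "of_int k"] by (simp add: mult.commute)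
      then show ?thesis unfolding F_def by simp
    qed
    ultimately show ?thesis using eq False by (simp add: integral_unique)
  qed
qed




definition E :: "('n::finite \<Rightarrow> nat) \<Rightarrow> real^'n \<Rightarrow> complex" where
  "E a \<theta> = (\<Prod>i\<in>UNIV. cis (\<theta> $ i) ^ a i)"

definition deg :: "('n::finite \<Rightarrow> nat) \<Rightarrow> nat" where
  "deg a = (\<Sum>i\<in>UNIV. a i)"

definition Bx :: "(real^'n::finite) set" where
  "Bx = cbox 0 (\<chi> i. 2*pi)"

lemma mem_Bx: "\<theta> \<in> Bx \<longleftrightarrow> (\<forall>i. 0 \<le> \<theta> $ i \<and> \<theta> $ i \<le> 2*pi)"
  unfolding Bx_def by (simp add: mem_box_cart)

lemma continuous_E: "continuous_on S (E a)"
  unfolding E_def by (intro continuous_intros)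

lemma norm_E: "norm (E a \<theta>) = 1"
  unfolding E_def by (simp add: prod_norm[symmetric] norm_power)

lemma torus_comp: "(r *\<^sub>R torus_pt \<theta>) $ i = of_real r * cis (\<theta> $ i)"
  unfolding torus_pt_def vector_scaleR_component by (simp add: scaleR_conv_of_real)

lemma monom_torus: "monom (r *\<^sub>R torus_pt \<theta>) a = of_real (r ^ deg a) * E a \<theta>"
  unfolding monom_def E_def deg_def torus_comp
  by (simp add: power_mult_distrib prod.distrib power_sum)

lemma cis_pow_cnj: "cis t ^ p * cnj (cis t) ^ q = cis (of_int (int p - int q) * t)"
proof -
  have "cis t ^ p * cnj (cis t) ^ q = cis (real p * t) * cis (real q * (- t))"
    by (simp only: Complex.DeMoivre cis_cnj)
  also have "\<dots> = cis (of_int (int p - int q) * t)"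
    by (simp add: cis_mult algebra_simps)
  finally show ?thesis .
qed

lemma ortho_E:
  "(\<integral>\<theta>. indicator Bx \<theta> *\<^sub>R (E a \<theta> * cnj (E b \<theta>)) \<partial>(lborel::(real^'n::finite) measure))
     = (if a = b then complex_of_real ((2*pi) ^ CARD('n)) else 0)"
proof -
  define f where "f i t = indicator {0..2*pi} t *\<^sub>R cis (of_int (int (a i) - int (b i)) * t)" for i t
  have int: "integrable lborel (f i)" for i
    unfolding f_def by (rule borel_integrable_compact) (auto intro!: continuous_intros)
  have pt: "indicator Bx \<theta> *\<^sub>R (E a \<theta> * cnj (E b \<theta>)) = (\<Prod>i\<in>UNIV. f i (\<theta> $ i))" for \<theta> :: "real^'n"
  proof -
    have "indicator Bx \<theta> = (\<Prod>i\<in>UNIV. indicator {0..2*pi} (\<theta> $ i) :: real)"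
      by (auto simp: indicator_def mem_Bx prod_zero_iff)
    then show ?thesis
      unfolding f_def E_def
      by (simp add: scaleR_conv_of_real prod.distrib[symmetric] cnj_prod power_mult_distrib)
         (intro prod.cong refl, simp add: cis_pow_cnj)
  qed
  have "(\<integral>\<theta>. indicator Bx \<theta> *\<^sub>R (E a \<theta> * cnj (E b \<theta>)) \<partial>(lborel::(real^'n::finite) measure))
       = (\<Prod>i\<in>UNIV. integral\<^sup>L lborel (f i))"
    unfolding pt by (rule integral_lborel_vec_prod[OF int])
  also have "\<dots> = (\<Prod>i\<in>UNIV. if a i = b i then complex_of_real (2*pi) else 0)"
    unfolding f_def by (intro prod.cong refl, subst cis_int_integral) auto
  also have "\<dots> = (if a = b then complex_of_real ((2*pi) ^ CARD('n)) else 0)"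
  proof (cases "a = b")
    case True then show ?thesis by simp
  next
    case False
    then obtain i where "a i \<noteq> b i" by auto
    then show ?thesis using False by (auto intro!: prod_zero)
  qed
  finally show ?thesis .
qed




lemma compact_Bx: "compact Bx"
  unfolding Bx_def by simp

lemma integrable_Bx:
  fixes g :: "real^'n::finite \<Rightarrow> 'b::{banach, second_countable_topology}"
  assumes "continuous_on UNIV g"
  shows "integrable lborel (\<lambda>\<theta>. indicator Bx \<theta> *\<^sub>R g \<theta>)"
  by (rule borel_integrable_compact[OF compact_Bx]) (use assms continuous_on_subset in blast)

lemma parseval_finite:
  fixes u :: "('n::finite \<Rightarrow> nat) \<Rightarrow> complex"
  assumes F: "finite F"
  shows "(\<integral>\<theta>. indicator Bx \<theta> * (cmod (\<Sum>a\<in>F. u a * E a \<theta>))\<^sup>2 \<partial>(lborel::(real^'n) measure))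
           = (2*pi) ^ CARD('n) * (\<Sum>a\<in>F. (cmod (u a))\<^sup>2)"
proof -
  define p where "p \<theta> = (\<Sum>a\<in>F. u a * E a \<theta>)" for \<theta>
  have cp: "continuous_on UNIV p"
    unfolding p_def by (intro continuous_intros continuous_E)
  have intc: "integrable lborel (\<lambda>\<theta>::real^'n. indicator Bx \<theta> *\<^sub>R (p \<theta> * cnj (p \<theta>)))"
    by (rule integrable_Bx) (intro continuous_intros cp)
  have intab: "integrable lborel (\<lambda>\<theta>::real^'n. indicator Bx \<theta> *\<^sub>R (u a * cnj (u b) * (E a \<theta> * cnj (E b \<theta>))))" for a b
    by (rule integrable_Bx) (intro continuous_intros continuous_E)
  have "(\<integral>\<theta>. indicator Bx \<theta> * (cmod (p \<theta>))\<^sup>2 \<partial>(lborel::(real^'n) measure))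
        = (\<integral>\<theta>. Re (indicator Bx \<theta> *\<^sub>R (p \<theta> * cnj (p \<theta>))) \<partial>lborel)"
    by (intro Bochner_Integration.integral_cong refl) (simp add: complex_mult_cnj cmod_power2)
  also have "\<dots> = Re (\<integral>\<theta>. indicator Bx \<theta> *\<^sub>R (p \<theta> * cnj (p \<theta>)) \<partial>lborel)"
    by (rule integral_Re[OF intc])
  also have "(\<integral>\<theta>. indicator Bx \<theta> *\<^sub>R (p \<theta> * cnj (p \<theta>)) \<partial>(lborel::(real^'n) measure))
        = (\<integral>\<theta>. (\<Sum>a\<in>F. \<Sum>b\<in>F. indicator Bx \<theta> *\<^sub>R (u a * cnj (u b) * (E a \<theta> * cnj (E b \<theta>)))) \<partial>lborel)"
  proof (rule Bochner_Integration.integral_cong[OF refl])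
    fix \<theta> :: "real^'n"
    show "indicator Bx \<theta> *\<^sub>R (p \<theta> * cnj (p \<theta>)) = (\<Sum>a\<in>F. \<Sum>b\<in>F. indicator Bx \<theta> *\<^sub>R (u a * cnj (u b) * (E a \<theta> * cnj (E b \<theta>))))"
      unfolding p_def cnj_sum sum_product scaleR_sum_right by (intro sum.cong[OF refl]) (simp add: ac_simps)
  qed
  also have "\<dots> = (\<Sum>a\<in>F. \<Sum>b\<in>F. u a * cnj (u b) * (\<integral>\<theta>. indicator Bx \<theta> *\<^sub>R (E a \<theta> * cnj (E b \<theta>)) \<partial>(lborel::(real^'n) measure)))" (is "_ = ?rhs")
  proof -
    have sw: "indicator Bx \<theta> *\<^sub>R (c * X) = c * (indicator Bx \<theta> *\<^sub>R X)" for \<theta> :: "real^'n" and c X :: complex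
      by (simp only: scaleR_conv_of_real mult.left_commute)
    have "(\<integral>\<theta>. (\<Sum>a\<in>F. \<Sum>b\<in>F. indicator Bx \<theta> *\<^sub>R (u a * cnj (u b) * (E a \<theta> * cnj (E b \<theta>)))) \<partial>(lborel::(real^'n) measure))
       = (\<Sum>a\<in>F. (\<integral>\<theta>. (\<Sum>b\<in>F. indicator Bx \<theta> *\<^sub>R (u a * cnj (u b) * (E a \<theta> * cnj (E b \<theta>)))) \<partial>(lborel::(real^'n) measure)))"
      by (rule Bochner_Integration.integral_sum) (intro Bochner_Integration.integrable_sum intab)
    also have "\<dots> = (\<Sum>a\<in>F. \<Sum>b\<in>F. (\<integral>\<theta>. indicator Bx \<theta> *\<^sub>R (u a * cnj (u b) * (E a \<theta> * cnj (E b \<theta>))) \<partial>(lborel::(real^'n) measure)))"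
      by (intro sum.cong refl Bochner_Integration.integral_sum intab)
    also have "\<dots> = ?rhs" unfolding sw by (simp only: integral_mult_right_zero)
    finally show ?thesis .
  qed
  also have "\<dots> = (\<Sum>a\<in>F. u a * cnj (u a) * complex_of_real ((2*pi) ^ CARD('n)))"
  proof (rule sum.cong[OF refl])
    fix a assume a: "a \<in> F"
    have "(\<Sum>b\<in>F. u a * cnj (u b) * (\<integral>\<theta>. indicator Bx \<theta> *\<^sub>R (E a \<theta> * cnj (E b \<theta>)) \<partial>(lborel::(real^'n) measure)))
        = (\<Sum>b\<in>F. if a = b then u a * cnj (u b) * complex_of_real ((2*pi) ^ CARD('n)) else 0)"
      unfolding ortho_E by (intro sum.cong refl) auto
    also have "\<dots> = u a * cnj (u a) * complex_of_real ((2*pi) ^ CARD('n))"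
      using a F by (simp add: sum.delta)
    finally show "(\<Sum>b\<in>F. u a * cnj (u b) * (\<integral>\<theta>. indicator Bx \<theta> *\<^sub>R (E a \<theta> * cnj (E b \<theta>)) \<partial>(lborel::(real^'n) measure)))
        = u a * cnj (u a) * complex_of_real ((2*pi) ^ CARD('n))" .
  qed
  also have "\<dots> = complex_of_real ((2*pi) ^ CARD('n) * (\<Sum>a\<in>F. (cmod (u a))\<^sup>2))"
    by (simp add: complex_norm_square[symmetric] sum_distrib_left mult.commute[of _ "_ * _"])
  finally show ?thesis
    unfolding p_def by simp
qed




lemma E_zero: "E a 0 = 1"
  unfolding E_def by simp

lemma torus_in_polydisc:
  assumes "0 \<le> r" "r < 1"
  shows "r *\<^sub>R torus_pt \<theta> \<in> polydisc"
  unfolding polydisc_def using assms by (simp add: torus_pt_def)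

lemma summable_g:
  assumes summ: "\<forall>z\<in>polydisc. (\<lambda>a. c a * monom z a) summable_on UNIV"
    and r: "0 \<le> r" "r < 1"
  shows "(\<lambda>a. cmod (c a) * r ^ deg a) summable_on UNIV"
proof -
  have "(\<lambda>a. c a * monom (r *\<^sub>R torus_pt 0) a) summable_on UNIV"
    using summ torus_in_polydisc[OF r] by blast
  then have "(\<lambda>a. norm (c a * monom (r *\<^sub>R torus_pt 0) a)) summable_on UNIV"
    by (rule summable_on_iff_abs_summable_on_complex[THEN iffD1])
  then show ?thesis
    using r by (simp add: monom_torus E_zero norm_mult norm_power)
qed

lemma tail:
  fixes c :: "('n::finite \<Rightarrow> nat) \<Rightarrow> complex"
  assumes summ: "\<forall>z\<in>polydisc. (\<lambda>a. c a * monom z a) summable_on UNIV"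
    and r: "0 \<le> r" "r < 1" and e: "e > 0"
  shows "\<exists>F0. finite F0 \<and> (\<forall>F. finite F \<and> F0 \<subseteq> F \<longrightarrow>
           (\<forall>\<theta>. cmod (fn c (r *\<^sub>R torus_pt \<theta>) - (\<Sum>a\<in>F. c a * monom (r *\<^sub>R torus_pt \<theta>) a)) \<le> e))"
proof -
  define g where "g a = cmod (c a) * r ^ deg a" for a
  have gs: "g summable_on UNIV" unfolding g_def by (rule summable_g[OF summ r])
  have "(sum g \<longlongrightarrow> infsum g UNIV) (finite_subsets_at_top UNIV)"
    using has_sum_infsum[OF gs] unfolding has_sum_def .
  then have "eventually (\<lambda>F. dist (sum g F) (infsum g UNIV) < e) (finite_subsets_at_top UNIV)"
    using e by (rule tendstoD)
  then obtain F0 where F0: "finite F0" "\<And>F. finite F \<Longrightarrow> F0 \<subseteq> F \<Longrightarrow> dist (sum g F) (infsum g UNIV) < e"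
    unfolding eventually_finite_subsets_at_top by auto
  show ?thesis
  proof (intro exI[of _ F0] conjI allI impI F0(1))
    fix F and \<theta> :: "real^'n" assume F: "finite F \<and> F0 \<subseteq> F"
    define z where "z = r *\<^sub>R torus_pt \<theta>"
    have zp: "z \<in> polydisc" unfolding z_def by (rule torus_in_polydisc[OF r])
    define h where "h a = c a * monom z a" for a
    have hs: "h summable_on UNIV" using summ zp unfolding h_def by blast
    have nh: "norm (h a) = g a" for a
      unfolding h_def g_def z_def using r by (simp add: monom_torus norm_mult norm_E norm_power)
    have "(\<lambda>a. norm (h a)) = g" using nh by auto
    then have hs': "(\<lambda>a. norm (h a)) summable_on (UNIV - F)"
      using summable_on_subset_banach[OF gs, of "UNIV - F"] by simp
    have "fn c z - (\<Sum>a\<in>F. h a) = infsum h (UNIV - F)"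
    proof -
      have "fn c z = infsum h UNIV" unfolding fn_def h_def by simp
      then show ?thesis using infsum_Diff[OF hs, of F] hs F by simp
    qed
    also have "norm \<dots> \<le> infsum (\<lambda>a. norm (h a)) (UNIV - F)"
      by (rule norm_infsum_bound) (use hs' in simp)
    also have "\<dots> = infsum g (UNIV - F)" by (simp add: nh)
    also have "\<dots> = infsum g UNIV - sum g F"
      using infsum_Diff[OF gs, of F] F by simp
    also have "\<dots> \<le> e" using F0(2)[of F] F by (simp add: dist_real_def)
    finally show "cmod (fn c (r *\<^sub>R torus_pt \<theta>) - (\<Sum>a\<in>F. c a * monom (r *\<^sub>R torus_pt \<theta>) a)) \<le> e"
      unfolding z_def h_def .
  qed
qed




lemma integral_Bx_const: "(\<integral>\<theta>. indicator Bx \<theta> * C \<partial>(lborel::(real^'n::finite) measure)) = C * (2*pi) ^ CARD('n)"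
proof -
  have "(\<integral>\<theta>. indicator Bx \<theta> * (cmod (\<Sum>a\<in>{(\<lambda>_. 0)::'n\<Rightarrow>nat}. 1 * E a \<theta>))\<^sup>2 \<partial>(lborel::(real^'n::finite) measure)) = (2*pi) ^ CARD('n) * (\<Sum>a\<in>{(\<lambda>_. 0)::'n\<Rightarrow>nat}. (cmod 1)\<^sup>2)"
    by (rule parseval_finite) simp
  then have "(\<integral>\<theta>. indicator Bx \<theta> \<partial>(lborel::(real^'n::finite) measure)) = (2*pi) ^ CARD('n)"
    by (simp add: E_def)
  then show ?thesis by simp
qed

lemma integrable_Bx_real:
  fixes g :: "real^'n::finite \<Rightarrow> real"
  assumes "continuous_on UNIV g"
  shows "integrable lborel (\<lambda>\<theta>. indicator Bx \<theta> * g \<theta>)"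
  using integrable_Bx[OF assms] by simp

lemma coeff_bound:
  fixes c :: "('n::finite \<Rightarrow> nat) \<Rightarrow> complex"
  assumes summ: "\<forall>z\<in>polydisc. (\<lambda>a. c a * monom z a) summable_on UNIV"
    and r: "0 \<le> r" "r < 1" and K: "0 \<le> K"
    and bd: "\<forall>\<theta>. cmod (fn c (r *\<^sub>R torus_pt \<theta>)) \<le> K"
    and G: "finite G"
  shows "(\<Sum>a\<in>G. (cmod (c a))\<^sup>2 * r ^ (2 * deg a)) \<le> K\<^sup>2"
proof (rule field_le_epsilon)
  fix e :: real assume e: "e > 0"
  define \<epsilon> where "\<epsilon> = min 1 (e / (2*K+1))"
  have ep: "\<epsilon> > 0" unfolding \<epsilon>_def using e K by simp
  have "(K + \<epsilon>)\<^sup>2 = K\<^sup>2 + (2*K + \<epsilon>) * \<epsilon>" by (simp add: power2_eq_square algebra_simps)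
  also have "\<dots> \<le> K\<^sup>2 + (2*K+1) * \<epsilon>"
    using ep by (intro add_left_mono mult_right_mono) (auto simp: \<epsilon>_def)
  also have "(2*K+1) * \<epsilon> \<le> e"
  proof -
    have "\<epsilon> \<le> e / (2*K+1)" by (simp add: \<epsilon>_def)
    then have "(2*K+1) * \<epsilon> \<le> (2*K+1) * (e / (2*K+1))" using K by (intro mult_left_mono) auto
    also have "\<dots> = e" using K by simp
    finally show ?thesis .
  qed
  finally have Ke: "(K + \<epsilon>)\<^sup>2 \<le> K\<^sup>2 + e" by simp
  obtain F0 where F0: "finite F0" "\<And>F \<theta>. finite F \<Longrightarrow> F0 \<subseteq> F \<Longrightarrow>
       cmod (fn c (r *\<^sub>R torus_pt \<theta>) - (\<Sum>a\<in>F. c a * monom (r *\<^sub>R torus_pt \<theta>) a)) \<le> \<epsilon>"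
    using tail[OF summ r ep] by blast
  define F where "F = F0 \<union> G"
  have F: "finite F" "F0 \<subseteq> F" "G \<subseteq> F" unfolding F_def using F0 G by auto
  define u where "u a = c a * of_real (r ^ deg a)" for a
  define p where "p \<theta> = (\<Sum>a\<in>F. u a * E a \<theta>)" for \<theta> :: "real^'n"
  have pm: "p \<theta> = (\<Sum>a\<in>F. c a * monom (r *\<^sub>R torus_pt \<theta>) a)" for \<theta>
    unfolding p_def u_def by (simp add: monom_torus mult.assoc)
  have pb: "cmod (p \<theta>) \<le> K + \<epsilon>" for \<theta>
  proof -
    have "cmod (p \<theta>) \<le> cmod (fn c (r *\<^sub>R torus_pt \<theta>)) + cmod (fn c (r *\<^sub>R torus_pt \<theta>) - p \<theta>)"
      by (metis add.commute diff_add_cancel norm_triangle_ineq4 norm_minus_commute norm_triangle_sub)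
    also have "\<dots> \<le> K + \<epsilon>" using bd F0(2)[OF F(1,2)] unfolding pm by (intro add_mono) auto
    finally show ?thesis .
  qed
  have cp: "continuous_on UNIV (\<lambda>\<theta>. (cmod (p \<theta>))\<^sup>2)"
    unfolding p_def by (intro continuous_intros continuous_E)
  have "(2*pi) ^ CARD('n) * (\<Sum>a\<in>F. (cmod (u a))\<^sup>2) = (\<integral>\<theta>. indicator Bx \<theta> * (cmod (p \<theta>))\<^sup>2 \<partial>(lborel::(real^'n) measure))"
    unfolding p_def by (rule parseval_finite[OF F(1), symmetric])
  also have "\<dots> \<le> (\<integral>\<theta>. indicator Bx \<theta> * (K + \<epsilon>)\<^sup>2 \<partial>(lborel::(real^'n) measure))"
  proof (rule integral_mono)
    show "integrable lborel (\<lambda>\<theta>::real^'n. indicator Bx \<theta> * (cmod (p \<theta>))\<^sup>2)"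
      by (rule integrable_Bx_real[OF cp])
    show "integrable lborel (\<lambda>\<theta>::real^'n. indicator Bx \<theta> * (K + \<epsilon>)\<^sup>2)"
      by (rule integrable_Bx_real) (intro continuous_intros)
    fix \<theta> :: "real^'n"
    have "(cmod (p \<theta>))\<^sup>2 \<le> (K + \<epsilon>)\<^sup>2" using pb[of \<theta>] by (intro power_mono) auto
    then show "indicator Bx \<theta> * (cmod (p \<theta>))\<^sup>2 \<le> indicator Bx \<theta> * (K + \<epsilon>)\<^sup>2"
      by (intro mult_left_mono) auto
  qed
  also have "\<dots> = (K + \<epsilon>)\<^sup>2 * (2*pi) ^ CARD('n)" by (rule integral_Bx_const)
  finally have "(\<Sum>a\<in>F. (cmod (u a))\<^sup>2) \<le> (K + \<epsilon>)\<^sup>2"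
    by (simp add: mult.commute)
  moreover have "(\<Sum>a\<in>G. (cmod (c a))\<^sup>2 * r ^ (2 * deg a)) \<le> (\<Sum>a\<in>F. (cmod (u a))\<^sup>2)"
  proof -
    have "(\<Sum>a\<in>G. (cmod (c a))\<^sup>2 * r ^ (2 * deg a)) = (\<Sum>a\<in>G. (cmod (u a))\<^sup>2)"
      unfolding u_def using r by (simp add: norm_mult norm_power power_mult_distrib power_mult[symmetric] mult.commute[of 2])
    also have "\<dots> \<le> (\<Sum>a\<in>F. (cmod (u a))\<^sup>2)"
      by (rule sum_mono2[OF F(1) F(3)]) auto
    finally show ?thesis .
  qed
  ultimately show "(\<Sum>a\<in>G. (cmod (c a))\<^sup>2 * r ^ (2 * deg a)) \<le> K\<^sup>2 + e" using Ke by linarith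
qed




lemma Bx_sets: "Bx \<in> sets (lborel::(real^'n::finite) measure)"
  unfolding Bx_def by simp

lemma inner_l2:
  fixes c :: "('n::finite \<Rightarrow> nat) \<Rightarrow> complex"
  assumes inner: "inner_fun c" and e: "e > 0"
  shows "\<exists>F. finite F \<and> (\<Sum>a\<in>F. (cmod (c a))\<^sup>2) > 1 - e"
proof -
  have summ: "\<forall>z\<in>polydisc. (\<lambda>a. c a * monom z a) summable_on UNIV"
    using inner unfolding inner_fun_def Hinf_def by blast
  obtain M where M: "\<forall>z\<in>polydisc. cmod (fn c z) \<le> M"
    using inner unfolding inner_fun_def Hinf_def by blast
  have AEL: "AE \<theta> in lborel. \<exists>L. ((\<lambda>r. fn c (r *\<^sub>R torus_pt \<theta>)) \<longlongrightarrow> L) (at_left 1) \<and> cmod L = 1"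
    using inner unfolding inner_fun_def by blast
  define r where "r k = 1 + - inverse (real (Suc k))" for k
  have r0: "0 \<le> r k" "r k < 1" for k
    unfolding r_def by (auto simp: field_simps)
  have rlim: "filterlim r (at_left 1) sequentially"
  proof (rule tendsto_imp_filterlim_at_left)
    show "r \<longlonglongrightarrow> 1" unfolding r_def by (rule LIMSEQ_inverse_real_of_nat_add_minus)
    show "\<forall>\<^sub>F x in sequentially. r x < 1" using r0 by simp
  qed
  have "\<forall>k. \<exists>F0. finite F0 \<and> (\<forall>F. finite F \<and> F0 \<subseteq> F \<longrightarrow>
           (\<forall>\<theta>. cmod (fn c (r k *\<^sub>R torus_pt \<theta>) - (\<Sum>a\<in>F. c a * monom (r k *\<^sub>R torus_pt \<theta>) a)) \<le> inverse (real (Suc k))))"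
    using tail[OF summ r0] by simp
  then have "\<exists>F0. \<forall>k. finite (F0 k) \<and> (\<forall>F. finite F \<and> F0 k \<subseteq> F \<longrightarrow>
           (\<forall>\<theta>. cmod (fn c (r k *\<^sub>R torus_pt \<theta>) - (\<Sum>a\<in>F. c a * monom (r k *\<^sub>R torus_pt \<theta>) a)) \<le> inverse (real (Suc k))))"
    by (rule choice)
  then obtain F where FF: "\<forall>k. finite (F k) \<and> (\<forall>F'. finite F' \<and> F k \<subseteq> F' \<longrightarrow>
           (\<forall>\<theta>. cmod (fn c (r k *\<^sub>R torus_pt \<theta>) - (\<Sum>a\<in>F'. c a * monom (r k *\<^sub>R torus_pt \<theta>) a)) \<le> inverse (real (Suc k))))"
    by blast
  have F: "\<And>k. finite (F k)" "\<And>k \<theta>. cmod (fn c (r k *\<^sub>R torus_pt \<theta>) - (\<Sum>a\<in>F k. c a * monom (r k *\<^sub>R torus_pt \<theta>) a)) \<le> inverse (real (Suc k))"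
    using FF by blast+
  define u where "u k a = c a * of_real (r k ^ deg a)" for k a
  define p where "p k \<theta> = (\<Sum>a\<in>F k. u k a * E a \<theta>)" for k and \<theta> :: "real^'n"
  have pm: "p k \<theta> = (\<Sum>a\<in>F k. c a * monom (r k *\<^sub>R torus_pt \<theta>) a)" for k \<theta>
    unfolding p_def u_def by (simp add: monom_torus mult.assoc)
  have Mp: "cmod (p k \<theta>) \<le> M + 1" for k \<theta>
  proof -
    have "cmod (p k \<theta>) \<le> cmod (fn c (r k *\<^sub>R torus_pt \<theta>)) + cmod (fn c (r k *\<^sub>R torus_pt \<theta>) - p k \<theta>)"
      by (metis add.commute diff_add_cancel norm_triangle_ineq4 norm_minus_commute norm_triangle_sub)
    also have "\<dots> \<le> M + 1"
    proof (intro add_mono)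
      show "cmod (fn c (r k *\<^sub>R torus_pt \<theta>)) \<le> M" using M torus_in_polydisc[OF r0] by blast
      have "inverse (real (Suc k)) \<le> 1" by (simp add: field_simps)
      then show "cmod (fn c (r k *\<^sub>R torus_pt \<theta>) - p k \<theta>) \<le> 1" using F(2)[of k \<theta>] unfolding pm by linarith
    qed
    finally show ?thesis .
  qed
  define s where "s k \<theta> = indicator Bx \<theta> * (cmod (p k \<theta>))\<^sup>2" for k and \<theta> :: "real^'n"
  have cp: "continuous_on UNIV (\<lambda>\<theta>. (cmod (p k \<theta>))\<^sup>2)" for k
    unfolding p_def by (intro continuous_intros continuous_E)
  have sint: "integrable lborel (s k)" for k
    unfolding s_def by (rule integrable_Bx_real[OF cp])
  have lim: "(\<lambda>k. integral\<^sup>L lborel (s k)) \<longlonglongrightarrow> integral\<^sup>L lborel (\<lambda>\<theta>::real^'n. indicator Bx \<theta>)"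
  proof (rule integral_dominated_convergence[where w = "\<lambda>\<theta>. indicator Bx \<theta> * (M+1)\<^sup>2"])
    show "(\<lambda>\<theta>::real^'n. indicator Bx \<theta>) \<in> borel_measurable lborel"
      by (rule borel_measurable_indicator) (simp add: Bx_def)
    show "s k \<in> borel_measurable lborel" for k
      by (rule borel_measurable_integrable[OF sint])
    show "integrable lborel (\<lambda>\<theta>::real^'n. indicator Bx \<theta> * (M + 1)\<^sup>2)"
      by (rule integrable_Bx_real) (intro continuous_intros)
    show "AE \<theta> in lborel. norm (s k \<theta>) \<le> indicator Bx \<theta> * (M + 1)\<^sup>2" for k
    proof (rule AE_I2)
      fix \<theta> :: "real^'n"
      have "(cmod (p k \<theta>))\<^sup>2 \<le> (M + 1)\<^sup>2" using Mp[of k \<theta>] by (intro power_mono) auto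
      then show "norm (s k \<theta>) \<le> indicator Bx \<theta> * (M + 1)\<^sup>2"
        unfolding s_def by (auto simp: indicator_def)
    qed
    show "AE \<theta> in lborel. (\<lambda>k. s k \<theta>) \<longlonglongrightarrow> indicator Bx \<theta>"
      using AEL
    proof (rule AE_mp, intro AE_I2 impI)
      fix \<theta> :: "real^'n"
      assume "\<exists>L. ((\<lambda>r. fn c (r *\<^sub>R torus_pt \<theta>)) \<longlongrightarrow> L) (at_left 1) \<and> cmod L = 1"
      then obtain L where L: "((\<lambda>r. fn c (r *\<^sub>R torus_pt \<theta>)) \<longlongrightarrow> L) (at_left 1)" "cmod L = 1" by blast
      have l1: "(\<lambda>k. fn c (r k *\<^sub>R torus_pt \<theta>)) \<longlonglongrightarrow> L"
        using filterlim_compose[OF L(1) rlim] by (simp add: o_def)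
      have l2: "(\<lambda>k. fn c (r k *\<^sub>R torus_pt \<theta>) - p k \<theta>) \<longlonglongrightarrow> 0"
      proof (rule Lim_null_comparison[OF _ LIMSEQ_inverse_real_of_nat])
        show "\<forall>\<^sub>F k in sequentially. norm (fn c (r k *\<^sub>R torus_pt \<theta>) - p k \<theta>) \<le> inverse (real (Suc k))"
          using F(2) unfolding pm by simp
      qed
      have "(\<lambda>k. p k \<theta>) \<longlonglongrightarrow> L - 0"
        using tendsto_diff[OF l1 l2] by simp
      then have "(\<lambda>k. indicator Bx \<theta> * (cmod (p k \<theta>))\<^sup>2) \<longlonglongrightarrow> indicator Bx \<theta> * (cmod L)\<^sup>2"
        by (intro tendsto_intros) simp
      then show "(\<lambda>k. s k \<theta>) \<longlonglongrightarrow> indicator Bx \<theta>"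
        using L(2) unfolding s_def by simp
    qed
  qed
  have lim': "(\<lambda>k. integral\<^sup>L lborel (s k)) \<longlonglongrightarrow> (2*pi) ^ CARD('n)"
  proof -
    have "integral\<^sup>L lborel (\<lambda>\<theta>::real^'n. indicator Bx \<theta>) = (2*pi) ^ CARD('n)"
      using integral_Bx_const[where 'n='n, of 1] by simp
    then show ?thesis using lim by simp
  qed
  have pos: "(2*pi) ^ CARD('n) > (0::real)" by simp
  have "eventually (\<lambda>k. integral\<^sup>L lborel (s k) > (2*pi) ^ CARD('n) * (1 - e)) sequentially"
    by (rule order_tendstoD(1)[OF lim']) (use pos e in simp)
  then obtain k where k: "integral\<^sup>L lborel (s k) > (2*pi) ^ CARD('n) * (1 - e)"
    by (meson eventually_sequentially order_refl)
  have "integral\<^sup>L lborel (s k) = (2*pi) ^ CARD('n) * (\<Sum>a\<in>F k. (cmod (u k a))\<^sup>2)"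
    unfolding s_def p_def by (rule parseval_finite[OF F(1)])
  also have "\<dots> \<le> (2*pi) ^ CARD('n) * (\<Sum>a\<in>F k. (cmod (c a))\<^sup>2)"
  proof (intro mult_left_mono sum_mono)
    fix a
    have "cmod (u k a) \<le> cmod (c a)"
      unfolding u_def using r0[of k]
      by (auto simp: norm_mult norm_power intro!: mult_left_le power_le_one)
    then show "(cmod (u k a))\<^sup>2 \<le> (cmod (c a))\<^sup>2" by (intro power_mono) auto
  qed simp
  finally have "(2*pi) ^ CARD('n) * (1 - e) < (2*pi) ^ CARD('n) * (\<Sum>a\<in>F k. (cmod (c a))\<^sup>2)"
    using k by linarith
  then have "1 - e < (\<Sum>a\<in>F k. (cmod (c a))\<^sup>2)"
    using pos mult_less_cancel_left_pos by blast
  then show ?thesis using F(1) by blast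
qed





lemma summable_restrict:
  fixes c :: "'a \<Rightarrow> complex"
  assumes "(\<lambda>a. c a * m a) summable_on UNIV"
  shows "(\<lambda>a. (if P a then c a else 0) * m a) summable_on UNIV"
proof -
  have "(\<lambda>a. norm (c a * m a)) summable_on UNIV"
    using assms by (rule summable_on_iff_abs_summable_on_complex[THEN iffD1])
  then have "(\<lambda>a. norm ((if P a then c a else 0) * m a)) summable_on UNIV"
    by (rule summable_on_comparison_test) (auto simp: norm_mult)
  then show ?thesis
    by (rule summable_on_iff_abs_summable_on_complex[THEN iffD2])
qed

lemma indep_coeff:
  fixes c :: "('n::finite \<Rightarrow> nat) \<Rightarrow> complex"
  assumes summ: "\<forall>z\<in>polydisc. (\<lambda>a. c a * monom z a) summable_on UNIV"
    and ind: "\<forall>z\<in>polydisc. \<forall>w\<in>polydisc. (\<forall>j. j \<noteq> i \<longrightarrow> z $ j = w $ j) \<longrightarrow> fn c z = fn c w"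
    and b: "b i \<noteq> 0"
  shows "c b = 0"
proof -
  define e where "e a = (if a i \<noteq> 0 then c a else 0)" for a
  define e' where "e' a = (if \<not> a i \<noteq> 0 then c a else 0)" for a
  have esumm: "\<forall>z\<in>polydisc. (\<lambda>a. e a * monom z a) summable_on UNIV"
  proof
    fix z :: "complex^'n" assume "z \<in> polydisc"
    then have "(\<lambda>a. c a * monom z a) summable_on UNIV" using summ by blast
    then show "(\<lambda>a. e a * monom z a) summable_on UNIV" unfolding e_def by (rule summable_restrict)
  qed
  have fe: "fn e z = 0" if z: "z \<in> polydisc" for z
  proof -
    define z0 where "z0 = (\<chi> j. if j = i then 0 else z $ j)"
    have z0p: "z0 \<in> polydisc" using z unfolding polydisc_def z0_def by simp
    have mz0: "monom z0 a = (if a i = 0 then monom z a else 0)" for a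
    proof (cases "a i = 0")
      case True
      then show ?thesis unfolding monom_def z0_def by (auto intro!: prod.cong)
    next
      case False
      then show ?thesis unfolding monom_def z0_def
        by (auto intro!: prod_zero[of UNIV _] exI[of _ i] simp: zero_power)
    qed
    have s: "(\<lambda>a. c a * monom z a) summable_on UNIV" using summ z by blast
    have s1: "(\<lambda>a. e a * monom z a) summable_on UNIV" unfolding e_def by (rule summable_restrict[OF s])
    have s2: "(\<lambda>a. e' a * monom z a) summable_on UNIV" unfolding e'_def by (rule summable_restrict[OF s])
    have "fn c z0 = fn e' z"
      unfolding fn_def mz0 e'_def by (intro infsum_cong) auto
    moreover have "fn c z = fn e z + fn e' z"
    proof -
      have "fn c z = (\<Sum>\<^sub>\<infinity>a. e a * monom z a + e' a * monom z a)"
        unfolding fn_def e_def e'_def by (intro infsum_cong) auto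
      also have "\<dots> = fn e z + fn e' z"
        unfolding fn_def by (rule infsum_add[OF s1 s2])
      finally show ?thesis .
    qed
    moreover have "fn c z = fn c z0"
      by (rule ind[rule_format, OF z z0p]) (simp add: z0_def)
    ultimately show ?thesis by simp
  qed
  have "(\<Sum>a\<in>{b}. (cmod (e a))\<^sup>2 * (1/2) ^ (2 * deg a)) \<le> 0\<^sup>2"
  proof (rule coeff_bound[OF esumm])
    show "\<forall>\<theta>. cmod (fn e ((1/2) *\<^sub>R torus_pt \<theta>)) \<le> 0"
    proof
      fix \<theta> :: "real^'n"
      have "fn e ((1/2::real) *\<^sub>R torus_pt \<theta>) = 0" by (rule fe[OF torus_in_polydisc]) auto
      then show "cmod (fn e ((1/2) *\<^sub>R torus_pt \<theta>)) \<le> 0" by simp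
    qed
  qed auto
  then have "e b = 0"
  proof (rule contrapos_pp)
    assume "e b \<noteq> 0"
    then have "(cmod (e b))\<^sup>2 * (1/2) ^ (2 * deg b) > 0" by simp
    then show "\<not> (\<Sum>a\<in>{b}. (cmod (e a))\<^sup>2 * (1/2) ^ (2 * deg a)) \<le> 0\<^sup>2" by simp
  qed
  then show ?thesis using b unfolding e_def by simp
qed

lemma finite_le_fun: "finite {b :: 'n::finite \<Rightarrow> nat. b \<le> a}"
proof (rule finite_subset)
  show "{b. b \<le> a} \<subseteq> PiE UNIV (\<lambda>i. {..a i})"
    by (auto simp: le_fun_def PiE_def extensional_def)
  show "finite (PiE UNIV (\<lambda>i. {..a i}))" by (intro finite_PiE) auto
qed

lemma conv_mono: "conv (mono_coeff g) c a = (if g \<le> a then c (\<lambda>j. a j - g j) else 0)"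
proof -
  have "conv (mono_coeff g) c a = (\<Sum>b\<in>{b. b \<le> a}. if g = b then c (\<lambda>j. a j - b j) else 0)"
    unfolding conv_def mono_coeff_def by (intro sum.cong) auto
  also have "\<dots> = (if g \<le> a then c (\<lambda>j. a j - g j) else 0)"
    using finite_le_fun[of a] by (simp add: sum.delta)
  finally show ?thesis .
qed


lemma infsum_finsum:
  fixes f :: "'i \<Rightarrow> 'a \<Rightarrow> complex"
  assumes "finite I" "\<And>i. i \<in> I \<Longrightarrow> f i summable_on A"
  shows "(\<lambda>x. \<Sum>i\<in>I. f i x) summable_on A \<and> infsum (\<lambda>x. \<Sum>i\<in>I. f i x) A = (\<Sum>i\<in>I. infsum (f i) A)"
  using assms
proof (induction I rule: finite_induct)
  case empty
  then show ?case by simp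
next
  case (insert j I)
  then have IH: "(\<lambda>x. \<Sum>i\<in>I. f i x) summable_on A" "infsum (\<lambda>x. \<Sum>i\<in>I. f i x) A = (\<Sum>i\<in>I. infsum (f i) A)"
    by auto
  have fj: "f j summable_on A" using insert by auto
  have "(\<lambda>x. f j x + (\<Sum>i\<in>I. f i x)) summable_on A"
    by (rule summable_on_add[OF fj IH(1)])
  moreover have "infsum (\<lambda>x. f j x + (\<Sum>i\<in>I. f i x)) A = infsum (f j) A + (\<Sum>i\<in>I. infsum (f i) A)"
    using infsum_add[OF fj IH(1)] IH(2) by simp
  ultimately show ?case using insert by simp
qed

definition gi :: "'n \<Rightarrow> 'n \<Rightarrow> nat" where
  "gi i = (\<lambda>j. if j = i then 0 else 1)"

definition shift :: "'n \<Rightarrow> ('n \<Rightarrow> nat) \<Rightarrow> 'n \<Rightarrow> nat" where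
  "shift i b = (\<lambda>j. gi i j + b j)"

lemma shift_inj: "inj (shift i)"
  by (auto simp: inj_def shift_def fun_eq_iff)

lemma range_shift: "range (shift i) = {a. gi i \<le> a}"
proof (auto simp: shift_def le_fun_def)
  fix a :: "'a \<Rightarrow> nat" assume "\<forall>x. gi i x \<le> a x"
  then have "a = (\<lambda>j. gi i j + (\<lambda>j. a j - gi i j) j)" by (auto simp: fun_eq_iff)
  then show "a \<in> range (\<lambda>b j. gi i j + b j)"
    by (intro image_eqI[where x="\<lambda>j. a j - gi i j"]) auto
qed

lemma monom_shift: "monom z (shift i b) = monom z (gi i) * monom z b"
  unfolding monom_def shift_def by (simp add: power_add prod.distrib)

lemma fn_conv_mono:
  fixes c :: "('n::finite \<Rightarrow> nat) \<Rightarrow> complex"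
  assumes s: "(\<lambda>a. c a * monom z a) summable_on UNIV"
  shows "(\<lambda>a. conv (mono_coeff (gi i)) c a * monom z a) summable_on UNIV \<and>
         infsum (\<lambda>a. conv (mono_coeff (gi i)) c a * monom z a) UNIV = monom z (gi i) * fn c z"
proof -
  define T where "T a = conv (mono_coeff (gi i)) c a * monom z a" for a
  have T0: "T a = 0" if "a \<notin> range (shift i)" for a
    using that unfolding T_def range_shift by (simp add: conv_mono)
  have Tsh: "(T \<circ> shift i) b = monom z (gi i) * (c b * monom z b)" for b
    unfolding T_def o_def by (simp add: conv_mono shift_def le_fun_def monom_shift[unfolded shift_def])
  have s2: "(T \<circ> shift i) summable_on UNIV"
    unfolding Tsh[abs_def] by (rule summable_on_cmult_right[OF s])
  then have s3: "T summable_on range (shift i)"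
    by (simp add: summable_on_reindex[OF inj_on_subset[OF shift_inj]])
  have s4: "T summable_on UNIV"
    by (rule summable_on_cong_neutral[THEN iffD1, OF _ _ _ s3]) (auto simp: T0)
  have "infsum T UNIV = infsum T (range (shift i))"
    by (rule infsum_cong_neutral) (auto simp: T0)
  also have "\<dots> = infsum (T \<circ> shift i) UNIV"
    by (rule infsum_reindex[OF inj_on_subset[OF shift_inj]]) simp
  also have "\<dots> = monom z (gi i) * fn c z"
    unfolding Tsh[abs_def] fn_def by (rule infsum_cmult_right') 
  finally show ?thesis using s4 unfolding T_def by simp
qed

theorem proposition8p2:
  fixes \<alpha> :: "'n::finite \<Rightarrow> real"
    and c :: "'n \<Rightarrow> ('n \<Rightarrow> nat) \<Rightarrow> complex"
    and z0 :: "complex ^ 'n"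
    and v :: "'n \<Rightarrow> complex"
  assumes n_gt1: "CARD('n) > 1"
    and alpha_nonneg: "\<forall>i. \<alpha> i \<ge> 0"
    and alpha_pq: "\<exists>p q. p \<noteq> q \<and> \<alpha> p \<noteq> 0 \<and> \<alpha> q \<noteq> 0"
    and alpha_norm: "(\<Sum>i\<in>UNIV. (\<alpha> i)\<^sup>2) = 1"
    and z0_torus: "\<forall>i. cmod (z0 $ i) = 1"
    and inner: "\<forall>i. inner_fun (c i)"
    and indep: "\<forall>i. \<forall>z\<in>polydisc. \<forall>w\<in>polydisc.
                   (\<forall>j. j \<noteq> i \<longrightarrow> z $ j = w $ j) \<longrightarrow> fn (c i) z = fn (c i) w"
    and radial: "\<forall>i. ((\<lambda>r. fn (c i) (r *\<^sub>R z0)) \<longlongrightarrow> v i) (at_left 1)"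
    and v_unimod: "\<forall>i. cmod (v i) = 1"
  defines "\<phi> \<equiv> (\<lambda>a. \<Sum>i\<in>UNIV. (complex_of_real (\<alpha> i) * cnj ((\<Prod>j\<in>UNIV - {i}. z0 $ j) * v i)) *
                 conv (mono_coeff (\<lambda>j. if j = i then 0 else 1)) (c i) a)"
  shows "\<not> has_lift \<phi>"
proof
  assume "has_lift \<phi>"
  then obtain d where dS: "d \<in> Schur" and dL: "\<forall>f\<in>Qmod. projQ (Toep d f) = projQ (Toep \<phi> f)"
    unfolding has_lift_def by blast
  define coef where "coef i = complex_of_real (\<alpha> i) * cnj ((\<Prod>j\<in>UNIV - {i}. z0 $ j) * v i)" for i
  have phi_eq: "\<phi> a = (\<Sum>i\<in>UNIV. coef i * (if gi i \<le> a then c i (\<lambda>j. a j - gi i j) else 0))" for a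
    unfolding \<phi>_def coef_def gi_def by (simp add: conv_mono)
  have Pn: "cmod (\<Prod>j\<in>UNIV - {i}. z0 $ j) = 1" for i
    by (simp add: prod_norm[symmetric] z0_torus)
  have coef_norm: "cmod (coef i) = \<alpha> i" for i
    unfolding coef_def norm_mult norm_of_real complex_mod_cnj using alpha_nonneg v_unimod Pn by simp
  have summ_c: "\<forall>z\<in>polydisc. (\<lambda>a. c i a * monom z a) summable_on UNIV" for i
    using inner unfolding inner_fun_def Hinf_def by blast
  have c0: "c i b = 0" if "b i \<noteq> 0" for i b
    by (rule indep_coeff[of "c i" i b, OF summ_c[of i] indep[THEN spec[of _ i]] that])
  have phi_shift: "\<phi> (shift i b) = coef i * c i b" if b: "b i = 0" for i b
  proof -
    have t: "coef j * (if gi j \<le> shift i b then c j (\<lambda>k. shift i b k - gi j k) else 0)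
             = (if j = i then coef i * c i b else 0)" for j
    proof (cases "j = i")
      case True
      have "gi i \<le> shift i b" by (simp add: le_fun_def shift_def)
      moreover have "(\<lambda>k. shift i b k - gi i k) = b" by (simp add: shift_def)
      ultimately show ?thesis using True by simp
    next
      case False
      have "\<not> gi j \<le> shift i b"
      proof
        assume "gi j \<le> shift i b"
        then have "gi j i \<le> shift i b i" by (simp add: le_fun_def)
        then show False using False b by (simp add: gi_def shift_def)
      qed
      then show ?thesis using False by simp
    qed
    show ?thesis unfolding phi_eq t by simp
  qed
  have phi_nonQ: "\<phi> a = 0" if a: "\<forall>i. 1 \<le> a i" for a
  proof -
    have cz: "c i (\<lambda>j. a j - gi i j) = 0" for i
      by (rule c0) (use a[rule_format, of i] in \<open>simp add: gi_def\<close>)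
    have t0: "coef i * (if gi i \<le> a then c i (\<lambda>j. a j - gi i j) else 0) = 0" for i
      using cz[of i] by simp
    show ?thesis unfolding phi_eq t0 by simp
  qed
  define one where "one = mono_coeff (\<lambda>_::'n. 0::nat)"
  have one_Q: "one \<in> Qmod"
  proof -
    have "(\<lambda>a. (cmod (one a))\<^sup>2) summable_on {\<lambda>_. 0}" by simp
    then have "(\<lambda>a. (cmod (one a))\<^sup>2) summable_on UNIV"
      by (rule summable_on_cong_neutral[THEN iffD1, rotated 3]) (auto simp: one_def mono_coeff_def)
    moreover have "Tz_adj_prod one = (\<lambda>_. 0)"
      unfolding Tz_adj_prod_def one_def mono_coeff_def by (auto simp: fun_eq_iff)
    ultimately show ?thesis unfolding Qmod_def H2_def by simp
  qed
  have Toep_one: "Toep e one = e" for e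
  proof
    fix a
    have "Toep e one a = (\<Sum>b\<in>{b. b \<le> a}. if b = a then e a else 0)"
      unfolding Toep_def conv_def one_def mono_coeff_def
    proof (intro sum.cong refl)
      fix b assume "b \<in> {b. b \<le> a}"
      then have ba: "b \<le> a" by simp
      have "((\<lambda>i. a i - b i) = (\<lambda>_. 0)) = (b = a)"
        using ba by (auto simp: fun_eq_iff le_fun_def intro: order.antisym)
      then show "e b * (if (\<lambda>i. a i - b i) = (\<lambda>_. 0) then 1 else 0) = (if b = a then e a else 0)"
        by auto
    qed
    also have "\<dots> = e a" using finite_le_fun[of a] by (simp add: sum.delta')
    finally show "Toep e one a = e a" .
  qed
  have dQ: "d a = \<phi> a" if a: "\<not> (\<forall>i. 1 \<le> a i)" for a
  proof -
    have "projQ (Toep d one) = projQ (Toep \<phi> one)" using dL one_Q by blast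
    then have "projQ d a = projQ \<phi> a" unfolding Toep_one by simp
    moreover have "\<not> (\<forall>i. 1 \<le> a i)" using a .
    ultimately show ?thesis unfolding projQ_def by (simp only: if_False)
  qed
  have summ_d: "\<forall>z\<in>polydisc. (\<lambda>a. d a * monom z a) summable_on UNIV"
    using dS unfolding Schur_def Hinf_def by blast
  have bd_d: "\<forall>z\<in>polydisc. cmod (fn d z) \<le> 1"
    using dS unfolding Schur_def by blast
  have dl2: "(\<Sum>a\<in>G. (cmod (d a))\<^sup>2) \<le> 1" if G: "finite G" for G
  proof -
    have "((\<lambda>r::real. \<Sum>a\<in>G. (cmod (d a))\<^sup>2 * r ^ (2 * deg a)) \<longlongrightarrow> (\<Sum>a\<in>G. (cmod (d a))\<^sup>2 * 1 ^ (2 * deg a))) (at_left 1)"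
      by (intro tendsto_intros)
    moreover have "eventually (\<lambda>r::real. (\<Sum>a\<in>G. (cmod (d a))\<^sup>2 * r ^ (2 * deg a)) \<le> 1) (at_left 1)"
      using eventually_at_left_real[OF zero_less_one]
    proof (rule eventually_mono)
      fix r :: real assume r: "r \<in> {0<..<1}"
      have "\<forall>\<theta>. cmod (fn d (r *\<^sub>R torus_pt (\<theta>::real^'n))) \<le> 1"
      proof
        fix \<theta> :: "real^'n"
        have "r *\<^sub>R torus_pt \<theta> \<in> polydisc" by (rule torus_in_polydisc) (use r in auto)
        then show "cmod (fn d (r *\<^sub>R torus_pt \<theta>)) \<le> 1" using bd_d by blast
      qed
      then have "(\<Sum>a\<in>G. (cmod (d a))\<^sup>2 * r ^ (2 * deg a)) \<le> 1\<^sup>2"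
        using coeff_bound[OF summ_d, of r 1 G] r G by simp
      then show "(\<Sum>a\<in>G. (cmod (d a))\<^sup>2 * r ^ (2 * deg a)) \<le> 1" by simp
    qed
    ultimately have "(\<Sum>a\<in>G. (cmod (d a))\<^sup>2 * 1 ^ (2 * deg a)) \<le> 1"
      by (rule tendsto_upperbound) simp
    then show ?thesis by simp
  qed
  have d_nonQ: "d a = 0" if a: "\<forall>i. 1 \<le> a i" for a
  proof (rule ccontr)
    assume da: "d a \<noteq> 0"
    define \<delta> where "\<delta> = (cmod (d a))\<^sup>2"
    have \<delta>: "\<delta> > 0" using da by (simp add: \<delta>_def)
    have "\<forall>i. \<exists>F. finite F \<and> (\<Sum>b\<in>F. (cmod (c i b))\<^sup>2) > 1 - \<delta>/2"
    proof
      fix i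
      show "\<exists>F. finite F \<and> (\<Sum>b\<in>F. (cmod (c i b))\<^sup>2) > 1 - \<delta>/2"
        by (rule inner_l2) (use inner \<delta> in auto)
    qed
    then have "\<exists>Fs. \<forall>i. finite (Fs i) \<and> (\<Sum>b\<in>Fs i. (cmod (c i b))\<^sup>2) > 1 - \<delta>/2"
      by (rule choice)
    then obtain Fs where Fs: "\<And>i. finite (Fs i)" "\<And>i. (\<Sum>b\<in>Fs i. (cmod (c i b))\<^sup>2) > 1 - \<delta>/2"
      by blast
    define F' where "F' i = {b \<in> Fs i. b i = 0}" for i
    have F'fin: "finite (F' i)" for i unfolding F'_def using Fs(1) by simp
    have F'sum: "(\<Sum>b\<in>F' i. (cmod (c i b))\<^sup>2) = (\<Sum>b\<in>Fs i. (cmod (c i b))\<^sup>2)" for i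
      unfolding F'_def by (rule sum.mono_neutral_left) (use Fs(1) c0 in auto)
    define U where "U = (\<Union>i\<in>UNIV. shift i ` F' i)"
    have aU: "a \<notin> U"
    proof
      assume "a \<in> U"
      then obtain i b where "b \<in> F' i" "a = shift i b" unfolding U_def by blast
      then have "a i = 0" by (simp add: F'_def shift_def gi_def)
      then show False using a[rule_format, of i] by simp
    qed
    have disj: "shift i ` F' i \<inter> shift j ` F' j = {}" if ij: "i \<noteq> j" for i j
    proof (rule ccontr)
      assume "shift i ` F' i \<inter> shift j ` F' j \<noteq> {}"
      then obtain b b' where bb: "b \<in> F' i" "b' \<in> F' j" "shift i b = shift j b'" by blast
      then have "shift i b i = shift j b' i" by simp
      then show False using bb(1) ij by (simp add: F'_def shift_def gi_def)
    qed
    have "finite U" unfolding U_def using F'fin by simp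
    then have "(\<Sum>x\<in>insert a U. (cmod (d x))\<^sup>2) \<le> 1" by (intro dl2) simp
    moreover have "(\<Sum>x\<in>insert a U. (cmod (d x))\<^sup>2) = \<delta> + (\<Sum>i\<in>UNIV. (\<alpha> i)\<^sup>2 * (\<Sum>b\<in>F' i. (cmod (c i b))\<^sup>2))"
    proof -
      have "(\<Sum>x\<in>insert a U. (cmod (d x))\<^sup>2) = \<delta> + (\<Sum>x\<in>U. (cmod (d x))\<^sup>2)"
        using \<open>finite U\<close> aU by (simp add: \<delta>_def)
      also have "(\<Sum>x\<in>U. (cmod (d x))\<^sup>2) = (\<Sum>i\<in>UNIV. \<Sum>x\<in>shift i ` F' i. (cmod (d x))\<^sup>2)"
        unfolding U_def by (rule sum.UNION_disjoint) (use F'fin disj in auto)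
      also have "\<dots> = (\<Sum>i\<in>UNIV. \<Sum>b\<in>F' i. (cmod (d (shift i b)))\<^sup>2)"
      proof (rule sum.cong[OF refl])
        fix i
        have "inj_on (shift i) (F' i)" by (rule inj_on_subset[OF shift_inj subset_UNIV])
        then show "(\<Sum>x\<in>shift i ` F' i. (cmod (d x))\<^sup>2) = (\<Sum>b\<in>F' i. (cmod (d (shift i b)))\<^sup>2)"
          by (simp add: sum.reindex)
      qed
      also have "\<dots> = (\<Sum>i\<in>UNIV. (\<alpha> i)\<^sup>2 * (\<Sum>b\<in>F' i. (cmod (c i b))\<^sup>2))"
      proof (intro sum.cong refl)
        fix i
        have "(cmod (d (shift i b)))\<^sup>2 = (\<alpha> i)\<^sup>2 * (cmod (c i b))\<^sup>2" if b: "b \<in> F' i" for b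
        proof -
          have bi: "b i = 0" using b by (simp add: F'_def)
          have "\<not> (\<forall>j. 1 \<le> shift i b j)"
            using bi by (auto simp: shift_def gi_def intro!: exI[of _ i])
          then have "d (shift i b) = coef i * c i b" using dQ phi_shift[of b i, OF bi] by simp
          then show ?thesis by (simp add: norm_mult coef_norm power_mult_distrib)
        qed
        then show "(\<Sum>b\<in>F' i. (cmod (d (shift i b)))\<^sup>2) = (\<alpha> i)\<^sup>2 * (\<Sum>b\<in>F' i. (cmod (c i b))\<^sup>2)"
          by (simp add: sum_distrib_left)
      qed
      finally show ?thesis .
    qed
    moreover have "(\<Sum>i\<in>UNIV. (\<alpha> i)\<^sup>2 * (\<Sum>b\<in>F' i. (cmod (c i b))\<^sup>2)) \<ge> (\<Sum>i\<in>UNIV. (\<alpha> i)\<^sup>2 * (1 - \<delta>/2))"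
    proof (intro sum_mono mult_left_mono)
      fix i show "1 - \<delta>/2 \<le> (\<Sum>b\<in>F' i. (cmod (c i b))\<^sup>2)" using Fs(2)[of i] F'sum[of i] by simp
    qed simp
    moreover have "(\<Sum>i\<in>UNIV. (\<alpha> i)\<^sup>2 * (1 - \<delta>/2)) = 1 - \<delta>/2"
      using alpha_norm by (simp add: sum_distrib_right[symmetric])
    ultimately show False using \<delta> by linarith
  qed
  have d_eq: "d = \<phi>"
  proof
    fix a show "d a = \<phi> a"
    proof (cases "\<forall>i. 1 \<le> a i")
      case True then show ?thesis using d_nonQ phi_nonQ by simp
    next
      case False then show ?thesis using dQ by simp
    qed
  qed
  have fn_phi: "fn \<phi> z = (\<Sum>i\<in>UNIV. coef i * (monom z (gi i) * fn (c i) z))" if z: "z \<in> polydisc" for z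
  proof -
    have sc: "(\<lambda>a. c i a * monom z a) summable_on UNIV" for i using summ_c z by blast
    have eq: "\<phi> a * monom z a = (\<Sum>i\<in>UNIV. coef i * (conv (mono_coeff (gi i)) (c i) a * monom z a))" for a
      unfolding \<phi>_def coef_def gi_def by (simp add: sum_distrib_right mult.assoc)
    have s: "(\<lambda>a. coef i * (conv (mono_coeff (gi i)) (c i) a * monom z a)) summable_on UNIV" for i
      using fn_conv_mono[OF sc] by (intro summable_on_cmult_right) blast
    have "fn \<phi> z = infsum (\<lambda>a. \<Sum>i\<in>UNIV. coef i * (conv (mono_coeff (gi i)) (c i) a * monom z a)) UNIV"
      unfolding fn_def eq by simp
    also have "\<dots> = (\<Sum>i\<in>UNIV. infsum (\<lambda>a. coef i * (conv (mono_coeff (gi i)) (c i) a * monom z a)) UNIV)"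
      using infsum_finsum[of UNIV "\<lambda>i a. coef i * (conv (mono_coeff (gi i)) (c i) a * monom z a)" UNIV] s by simp
    also have "\<dots> = (\<Sum>i\<in>UNIV. coef i * (monom z (gi i) * fn (c i) z))"
      using fn_conv_mono[OF sc] by (simp add: infsum_cmult_right')
    finally show ?thesis .
  qed
  define A where "A = (\<Sum>i\<in>UNIV. \<alpha> i)"
  have A1: "A > 1"
  proof -
    obtain p q where pq: "p \<noteq> q" "\<alpha> p \<noteq> 0" "\<alpha> q \<noteq> 0" using alpha_pq by blast
    have ap: "\<alpha> p > 0" "\<alpha> q > 0" using pq alpha_nonneg by (auto simp: order.order_iff_strict)
    have le: "\<alpha> i \<le> A" for i
      unfolding A_def by (rule member_le_sum) (use alpha_nonneg in auto)
    have "\<alpha> p + \<alpha> q = (\<Sum>i\<in>{p,q}. \<alpha> i)" using pq by simp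
    also have "\<dots> \<le> A" unfolding A_def by (rule sum_mono2) (use alpha_nonneg in auto)
    finally have pqA: "\<alpha> p + \<alpha> q \<le> A" .
    have "1 = (\<Sum>i\<in>UNIV. \<alpha> i * \<alpha> i)" using alpha_norm by (simp add: power2_eq_square)
    also have "\<dots> < (\<Sum>i\<in>UNIV. \<alpha> i * A)"
    proof (rule sum_strict_mono_ex1)
      show "\<forall>i\<in>UNIV. \<alpha> i * \<alpha> i \<le> \<alpha> i * A" using le alpha_nonneg by (auto intro: mult_left_mono)
      have "\<alpha> p * \<alpha> p < \<alpha> p * A" using ap pqA by (intro mult_strict_left_mono) auto
      then show "\<exists>i\<in>UNIV. \<alpha> i * \<alpha> i < \<alpha> i * A" by blast
    qed simp
    also have "\<dots> = A * A" unfolding A_def by (simp add: sum_distrib_right)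
    finally have AA: "1 < A * A" .
    have "A \<ge> 0" unfolding A_def using alpha_nonneg by (simp add: sum_nonneg)
    show ?thesis
    proof (rule ccontr)
      assume "\<not> A > 1"
      then have "A * A \<le> 1" using \<open>A \<ge> 0\<close> by (intro mult_le_one) auto
      then show False using AA by simp
    qed
  qed
  have z0p: "r *\<^sub>R z0 \<in> polydisc" if "r \<in> {0<..<1::real}" for r
    using that z0_torus unfolding polydisc_def by (simp add: norm_scaleR)
  have ev: "eventually (\<lambda>r. fn \<phi> (r *\<^sub>R z0) = (\<Sum>i\<in>UNIV. coef i * (monom (r *\<^sub>R z0) (gi i) * fn (c i) (r *\<^sub>R z0)))) (at_left (1::real))"
    using eventually_at_left_real[OF zero_less_one] by (rule eventually_mono) (use fn_phi z0p in blast)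
  have mono_z0: "monom z0 (gi i) = (\<Prod>j\<in>UNIV - {i}. z0 $ j)" for i
  proof -
    have "monom z0 (gi i) = z0 $ i ^ gi i i * (\<Prod>j\<in>UNIV - {i}. z0 $ j ^ gi i j)"
      unfolding monom_def by (rule prod.remove) auto
    also have "\<dots> = (\<Prod>j\<in>UNIV - {i}. z0 $ j)"
      by (simp add: gi_def)
    finally show ?thesis .
  qed
  have val: "coef i * (monom z0 (gi i) * v i) = complex_of_real (\<alpha> i)" for i
  proof -
    define w where "w = (\<Prod>j\<in>UNIV - {i}. z0 $ j) * v i"
    have wn: "cmod w = 1" unfolding w_def using Pn v_unimod by (simp add: norm_mult)
    have "coef i * (monom z0 (gi i) * v i) = complex_of_real (\<alpha> i) * (cnj w * w)"
      unfolding coef_def mono_z0 w_def by (simp add: mult.assoc)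
    also have "cnj w * w = 1" using wn complex_norm_square[of w] by (simp add: mult.commute)
    finally show ?thesis by simp
  qed
  have mlim: "((\<lambda>r. monom (r *\<^sub>R z0) (gi i)) \<longlongrightarrow> monom z0 (gi i)) (at_left (1::real))" for i
  proof -
    have "((\<lambda>r::real. \<Prod>j\<in>UNIV. (r *\<^sub>R (z0 $ j)) ^ gi i j) \<longlongrightarrow> (\<Prod>j\<in>UNIV. ((1::real) *\<^sub>R (z0 $ j)) ^ gi i j)) (at_left 1)"
      by (intro tendsto_intros)
    then show ?thesis unfolding monom_def by simp
  qed
  have lim: "((\<lambda>r. fn \<phi> (r *\<^sub>R z0)) \<longlongrightarrow> complex_of_real A) (at_left (1::real))"
  proof -
    have "((\<lambda>r. \<Sum>i\<in>UNIV. coef i * (monom (r *\<^sub>R z0) (gi i) * fn (c i) (r *\<^sub>R z0)))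
           \<longlongrightarrow> (\<Sum>i\<in>UNIV. coef i * (monom z0 (gi i) * v i))) (at_left (1::real))"
      using mlim radial by (intro tendsto_intros) auto
    then have "((\<lambda>r. \<Sum>i\<in>UNIV. coef i * (monom (r *\<^sub>R z0) (gi i) * fn (c i) (r *\<^sub>R z0)))
           \<longlongrightarrow> complex_of_real A) (at_left (1::real))"
      unfolding val A_def by simp
    then show ?thesis using tendsto_cong[OF ev] by blast
  qed
  have "norm (complex_of_real A) \<le> 1"
  proof (rule tendsto_upperbound[OF tendsto_norm[OF lim]])
    show "eventually (\<lambda>r. norm (fn \<phi> (r *\<^sub>R z0)) \<le> 1) (at_left (1::real))"
      using eventually_at_left_real[OF zero_less_one] by (rule eventually_mono) (use bd_d z0p d_eq in blast)
  qed simp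
  then show False using A1 by simp
qed


end
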